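(* Let $\Phi$ be a real, additive gain graph on $\{1,\dots,n\}$ and let $\mathbf{Q}=(Q_1,\dots,Q_n)\in(\mathbb{E}^d)^n$ with $Q_i\neq Q_j$ whenever $i$ and $j$ are adjacent in $\Phi$. Let $C$ be a circle in $\Phi$ and let $\mathcal{C}=\{h(e):e\in C\}\subseteq\mathcal{H}(\Phi;\mathbf{Q})$. If $C$ is unbalanced, then $\bigcap\mathcal{C}=\emptyset$. If $C$ is balanced and $e\in C$, then $\bigcap\mathcal{C}=\bigcap(\mathcal{C}\setminus\{h(e)\})$.
   Context: $\mathbb{E}^d$ is Euclidean $d$-space with distance $d(\cdot,\cdot)$; $\psi_{ij}(P)=d(P,Q_i)^2-d(P,Q_j)^2$. A real, additive gain graph $\Phi$ on vertex set $\{1,\dots,n\}$ is a finite graph (multiple edges allowed, every edge with two distinct endpoints) with gains $\phi(e;i,j)\in\mathbb{R}$ for each edge $e$ with endpoints $i,j$, satisfying $\phi(e;j,i)=-\phi(e;i,j)$. A circle is a simple closed path; it is balanced if the sum of its gains, read in a consistent direction, is $0$. The Pythagorean arrangement $\mathcal{H}(\Phi;\mathbf{Q})$ consists of the hyperplanes $h(e)=\{P:\psi_{ij}(P)=\phi(e;i,j)\}$, one for each edge $e$ with endpoints $i,j$. *)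

theory Defs
  imports "HOL-Analysis.Analysis"
begin

text \<open>A real additive gain graph on vertex set {1..n}: a finite edge set E (edges are
abstract identifiers, so multiple edges are allowed), each edge e with a reference
orientation ends e = (i,j), i \<noteq> j, and gain g e = phi(e;i,j).\<close>

definition gain_graph :: "nat \<Rightarrow> 'e set \<Rightarrow> ('e \<Rightarrow> nat \<times> nat) \<Rightarrow> bool" where
  "gain_graph n E ends \<longleftrightarrow> finite E \<and>
     (\<forall>e\<in>E. fst (ends e) \<in> {1..n} \<and> snd (ends e) \<in> {1..n} \<and> fst (ends e) \<noteq> snd (ends e))"

definition gain :: "('e \<Rightarrow> nat \<times> nat) \<Rightarrow> ('e \<Rightarrow> real) \<Rightarrow> 'e \<Rightarrow> nat \<Rightarrow> nat \<Rightarrow> real" where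
  "gain ends g e i j = (if ends e = (i, j) then g e else - g e)"

definition adjacent :: "'e set \<Rightarrow> ('e \<Rightarrow> nat \<times> nat) \<Rightarrow> nat \<Rightarrow> nat \<Rightarrow> bool" where
  "adjacent E ends i j \<longleftrightarrow> (\<exists>e\<in>E. ends e = (i, j) \<or> ends e = (j, i))"

definition circle :: "'e set \<Rightarrow> ('e \<Rightarrow> nat \<times> nat) \<Rightarrow> nat list \<Rightarrow> 'e list \<Rightarrow> bool" where
  "circle E ends vs es \<longleftrightarrow> length vs = length es \<and> length es \<ge> 2 \<and>
     distinct vs \<and> distinct es \<and> set es \<subseteq> E \<and>
     (\<forall>m < length es. ends (es ! m) = (vs ! m, vs ! ((m + 1) mod length es)) \<or>
                      ends (es ! m) = (vs ! ((m + 1) mod length es), vs ! m))"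

definition balanced :: "('e \<Rightarrow> nat \<times> nat) \<Rightarrow> ('e \<Rightarrow> real) \<Rightarrow> nat list \<Rightarrow> 'e list \<Rightarrow> bool" where
  "balanced ends g vs es \<longleftrightarrow>
     (\<Sum>m < length es. gain ends g (es ! m) (vs ! m) (vs ! ((m + 1) mod length es))) = 0"

definition psi :: "(nat \<Rightarrow> 'a::euclidean_space) \<Rightarrow> nat \<Rightarrow> nat \<Rightarrow> 'a \<Rightarrow> real" where
  "psi Q i j P = (dist P (Q i))\<^sup>2 - (dist P (Q j))\<^sup>2"

definition hyp :: "(nat \<Rightarrow> 'a::euclidean_space) \<Rightarrow> ('e \<Rightarrow> nat \<times> nat) \<Rightarrow> ('e \<Rightarrow> real) \<Rightarrow> 'e \<Rightarrow> 'a set" where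
  "hyp Q ends g e = {P. psi Q (fst (ends e)) (snd (ends e)) P = gain ends g e (fst (ends e)) (snd (ends e))}"

end

theory Submission
  imports Defs
begin

lemma tele_sum:
  fixes f :: "nat \<Rightarrow> real"
  assumes "k > 0"
  shows "(\<Sum>m<k. f m - f ((m+1) mod k)) = 0"
proof -
  obtain k' where k: "k = Suc k'" using assms by (cases k) auto
  have "(\<Sum>m<k. f ((m+1) mod k)) = (\<Sum>m<k'. f ((m+1) mod k)) + f 0"
    using k by (simp add: sum.lessThan_Suc)
  also have "(\<Sum>m<k'. f ((m+1) mod k)) = (\<Sum>m<k'. f (Suc m))"
    by (rule sum.cong) (auto simp: k)
  also have "(\<Sum>m<k'. f (Suc m)) + f 0 = (\<Sum>m<k. f m)"
    unfolding k by (simp only: sum.lessThan_Suc_shift add.commute)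
  finally show ?thesis by (simp add: sum_subtractf)
qed

theorem lemma5p2:
  fixes n :: nat and E :: "'e set" and ends :: "'e \<Rightarrow> nat \<times> nat" and g :: "'e \<Rightarrow> real"
    and Q :: "nat \<Rightarrow> 'a::euclidean_space" and vs :: "nat list" and es :: "'e list"
  assumes "gain_graph n E ends"
    and "\<And>i j. adjacent E ends i j \<Longrightarrow> Q i \<noteq> Q j"
    and "circle E ends vs es"
  shows "(\<not> balanced ends g vs es \<longrightarrow> (\<Inter>f\<in>set es. hyp Q ends g f) = {})
       \<and> (balanced ends g vs es \<longrightarrow>
           (\<forall>e\<in>set es. (\<Inter>f\<in>set es - {e}. hyp Q ends g f) = (\<Inter>f\<in>set es. hyp Q ends g f)))"
proof -
  define k where "k = length es"
  have c: "length vs = k" "k \<ge> 2" "distinct vs" "distinct es"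
    "\<And>m. m < k \<Longrightarrow> ends (es ! m) = (vs ! m, vs ! ((m + 1) mod k)) \<or>
                      ends (es ! m) = (vs ! ((m + 1) mod k), vs ! m)"
    using assms(3) unfolding circle_def k_def by auto
  define a where "a P m = psi Q (vs!m) (vs!((m+1) mod k)) P" for P m
  define b where "b m = gain ends g (es!m) (vs!m) (vs!((m+1) mod k))" for m
  have key: "P \<in> hyp Q ends g (es!m) \<longleftrightarrow> a P m = b m" if m: "m < k" for P m
  proof -
    have ne: "vs!m \<noteq> vs!((m+1) mod k)"
    proof
      assume "vs!m = vs!((m+1) mod k)"
      hence "m = (m+1) mod k" using c(1,3) m nth_eq_iff_index_eq[of vs m "(m+1) mod k"] c(2)
        by simp
      moreover have "(m+1) mod k = (if m+1 = k then 0 else m+1)" using m by auto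
      ultimately show False using c(2) by (auto split: if_splits)
    qed
    from c(5)[OF m] show ?thesis
    proof
      assume h: "ends (es ! m) = (vs ! m, vs ! ((m + 1) mod k))"
      show ?thesis unfolding hyp_def a_def b_def using h by simp
    next
      assume h: "ends (es ! m) = (vs ! ((m + 1) mod k), vs ! m)"
      show ?thesis unfolding hyp_def a_def b_def using h ne
        by (auto simp: gain_def psi_def)
    qed
  qed
  have asum: "(\<Sum>m<k. a P m) = 0" for P
    unfolding a_def psi_def using tele_sum[of k "\<lambda>m. (dist P (Q (vs!m)))\<^sup>2"] c(2) by simp
  have bal: "balanced ends g vs es \<longleftrightarrow> (\<Sum>m<k. b m) = 0"
    unfolding balanced_def b_def k_def by simp
  have setes: "f \<in> set es \<longleftrightarrow> (\<exists>m<k. f = es!m)" for f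
    by (auto simp: k_def in_set_conv_nth)
  have p1: "(\<Inter>f\<in>set es. hyp Q ends g f) = {}" if nb: "\<not> balanced ends g vs es"
  proof (rule ccontr)
    assume "(\<Inter>f\<in>set es. hyp Q ends g f) \<noteq> {}"
    then obtain P where P: "\<And>f. f \<in> set es \<Longrightarrow> P \<in> hyp Q ends g f" by blast
    have "\<And>m. m < k \<Longrightarrow> a P m = b m" using P key setes by blast
    hence "(\<Sum>m<k. b m) = (\<Sum>m<k. a P m)" by simp
    thus False using asum nb bal by simp
  qed
  have p2: "(\<Inter>f\<in>set es - {e}. hyp Q ends g f) = (\<Inter>f\<in>set es. hyp Q ends g f)"
    if bb: "balanced ends g vs es" and e: "e \<in> set es" for e
  proof
    show "(\<Inter>f\<in>set es. hyp Q ends g f) \<subseteq> (\<Inter>f\<in>set es - {e}. hyp Q ends g f)" by blast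
  next
    show "(\<Inter>f\<in>set es - {e}. hyp Q ends g f) \<subseteq> (\<Inter>f\<in>set es. hyp Q ends g f)"
    proof
      fix P assume P: "P \<in> (\<Inter>f\<in>set es - {e}. hyp Q ends g f)"
      obtain j where j: "j < k" "e = es!j" using e setes by blast
      have oth: "a P m = b m" if "m < k" "m \<noteq> j" for m
      proof -
        have "es!m \<noteq> es!j" using c(4) that j(1) by (simp add: k_def nth_eq_iff_index_eq)
        hence "P \<in> hyp Q ends g (es!m)" using P that j by (auto simp: k_def)
        thus ?thesis using key that by blast
      qed
      have fin: "finite {..<k}" by simp
      have "(\<Sum>m<k. a P m) = a P j + (\<Sum>m\<in>{..<k}-{j}. a P m)"
        using sum.remove[OF fin, of j] j by simp
      moreover have "(\<Sum>m<k. b m) = b j + (\<Sum>m\<in>{..<k}-{j}. b m)"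
        using sum.remove[OF fin, of j] j by simp
      moreover have "(\<Sum>m\<in>{..<k}-{j}. a P m) = (\<Sum>m\<in>{..<k}-{j}. b m)"
        using oth by (intro sum.cong) auto
      ultimately have "a P j = b j" using asum[of P] bb bal by simp
      hence Pj: "P \<in> hyp Q ends g e" using key j by blast
      show "P \<in> (\<Inter>f\<in>set es. hyp Q ends g f)"
      proof
        fix f assume "f \<in> set es"
        thus "P \<in> hyp Q ends g f" using P Pj by (cases "f = e") auto
      qed
    qed
  qed
  show ?thesis using p1 p2 by blast
qed

end
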